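(* Let $N\ge 1$, $m\ge 1$ and let $a_1,\dots,a_N$, $k_1,\dots,k_m$ be positive integers satisfying the Calabi--Yau condition $\sum_{i=1}^N a_i=\sum_{l=1}^m k_l$. Let $d\ge 2$, let $f$ be an integer with $1\le f\le d-1$, and let $\sigma=(d_1,\dots,d_l)$ with $d_1\le\cdots\le d_l$, $\sum_{i=1}^l d_i=d-f$, be a partition of $d-f$ (so that $(f,\sigma)$ determines a type (iii) graph $\Gamma$ of degree $d$). Let $f_\Gamma$ be the rational function in the variables $w$, $z_0$, $z_{i,j}$ ($1\le i\le l$, $1\le j\le d_i$), with the convention $z_{i,0}:=z_0$, given by \[ f_\Gamma=\frac{\mathrm{Sym}(\sigma)}{24\bigl(\prod_{i=1}^Na_i\bigr)^{d}(z_0)^{N(f-1)}} \Biggl( \prod_{i=1}^l\prod_{j=1}^{d_i}\frac{1}{(z_{i,j})^N}\Biggr)\left(-\frac{N-m}{N}\frac{1}{w^N}-\frac{N+m}{N}\frac{1}{(z_0)^N} \right) \] \[ \times \frac{1}{(w-z_0)^2\,q(w,z_0)\,(q(z_0,z_0))^{f-1}} \Biggl( \prod_{p=1}^m\frac{1}{(k_pz_0)^{l-1}}\,\frac{e_{k_p}(w,z_0)\, (e_{k_p}(z_0,z_0) )^{f-1}}{k_p w\, (k_p z_0 )^{f}} \Biggr) \Biggl( \prod_{i=1}^l\frac{\prod_{p=1}^me_{k_p}(z_0,z_{i,1})}{q(z_0,z_{i,1})(z_{i,1}-z_0)}\Biggr) \] \[ \times \prod_{i=1}^l\prod_{j=1}^{d_i-1}\frac{\prod_{p=1}^m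 e_{k_p}(z_{i,j},z_{i,j+1})}{q(z_{i,j},z_{i,j+1})\,(2z_{i,j}-z_{i,j-1}-z_{i,j+1})\,\prod_{p=1}^m k_pz_{i,j}} . \] Let $\mathrm{Res}(f_\Gamma)$ be the number obtained as follows: first take the residue in $w$ at $w=z_0$; then take the residue of the result in $z_0$ at $z_0=0$; then, for each $i$ (the order among different $i$ does not matter), for $j=1,2,\dots,d_i-1$ in ascending order, replace the current function by the sum of its residues in $z_{i,j}$ at $z_{i,j}=0$ and at $z_{i,j}=\frac{z_{i,j-1}+z_{i,j+1}}{2}$; finally take the residue in $z_{i,d_i}$ at $z_{i,d_i}=0$. Then $\mathrm{Res}(f_\Gamma)=0$.
   Context: Notation: $e_k(x,y):=\prod_{i=0}^k\bigl(ix+(k-i)y\bigr)$ and $q(x,y):=\prod_{i=1}^N\prod_{j=1}^{a_i-1}\bigl(jx+(a_i-j)y\bigr)$, where the inner product is $1$ when $a_i=1$. For a partition $\sigma=(d_1,\dots,d_l)$ of length $l$, $\mathrm{Sym}(\sigma):=\frac{(l-1)!}{\prod_{i}\mathrm{mul}(\sigma,i)!}$, where $\mathrm{mul}(\sigma,i)$ is the number of parts of $\sigma$ equal to $i$. This $f_\Gamma$ is the integrand attached, in the paper's definition of the elliptic virtual structure constant $w\bigl(\prod_a(\mathcal O_{h^a})^{n_a}\bigr)_{1,d}$ of the complete intersection of degrees $k_1,\dots,k_m$ in the weighted projective space $P(a_1,\dots,a_N)$, to the type (iii) graph consisting of a central cluster vertex of degree $f$ and a star attached to it given by $\sigma$;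 in the Calabi--Yau case the degree selection rule forces all insertion exponents $n_a$ with $a\ge 2$ to vanish, so the insertion factor $\prod_{a\ge2}(\cdots)^{n_a}$ of the general integrand equals $1$, which is the form written here. *)

theory Defs
  imports "HOL-Complex_Analysis.Complex_Analysis"
begin

definition ecy :: "nat \<Rightarrow> complex \<Rightarrow> complex \<Rightarrow> complex" where
  "ecy k x y = (\<Prod>i\<in>{0..k}. of_nat i * x + of_nat (k - i) * y)"

definition qcy :: "nat list \<Rightarrow> complex \<Rightarrow> complex \<Rightarrow> complex" where
  "qcy a x y = (\<Prod>i<length a. \<Prod>j\<in>{1..<a!i}. of_nat j * x + of_nat (a!i - j) * y)"

definition Sym :: "nat list \<Rightarrow> complex" where
  "Sym ds = of_nat (fact (length ds - 1)) / (\<Prod>i\<in>set ds. of_nat (fact (count_list ds i)))"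

text \<open>Variables: w, z0, and z_{i,j} = zz i j for chain index i < l (0-based) and 1 <= j <= d_i.
  Convention z_{i,0} := z0.\<close>
definition zv :: "complex \<Rightarrow> (nat \<Rightarrow> nat \<Rightarrow> complex) \<Rightarrow> nat \<Rightarrow> nat \<Rightarrow> complex" where
  "zv z0 zz i j = (if j = 0 then z0 else zz i j)"

definition fGamma :: "nat list \<Rightarrow> nat list \<Rightarrow> nat \<Rightarrow> nat \<Rightarrow> nat list \<Rightarrow>
    complex \<Rightarrow> complex \<Rightarrow> (nat \<Rightarrow> nat \<Rightarrow> complex) \<Rightarrow> complex" where
  "fGamma a k d f ds w z0 zz =
    (let N = length a; m = length k; l = length ds; z = zv z0 zz in
     Sym ds / (24 * (of_nat (\<Prod>i<N. a!i)) ^ d * z0 ^ (N * (f - 1)))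
     * (\<Prod>i<l. \<Prod>j\<in>{1..ds!i}. 1 / (z i j) ^ N)
     * (- ((of_nat N - of_nat m) / of_nat N) * (1 / w ^ N)
        - ((of_nat N + of_nat m) / of_nat N) * (1 / z0 ^ N))
     * (1 / ((w - z0)^2 * qcy a w z0 * (qcy a z0 z0) ^ (f - 1)))
     * (\<Prod>p<m. (1 / (of_nat (k!p) * z0) ^ (l - 1))
          * (ecy (k!p) w z0 * (ecy (k!p) z0 z0) ^ (f - 1)
             / (of_nat (k!p) * w * (of_nat (k!p) * z0) ^ f)))
     * (\<Prod>i<l. (\<Prod>p<m. ecy (k!p) z0 (z i 1)) / (qcy a z0 (z i 1) * (z i 1 - z0)))
     * (\<Prod>i<l. \<Prod>j\<in>{1..<ds!i}.
          (\<Prod>p<m. ecy (k!p) (z i j) (z i (j+1)))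
          / (qcy a (z i j) (z i (j+1)) * (2 * z i j - z i (j - 1) - z i (j+1))
             * (\<Prod>p<m. of_nat (k!p) * z i j))))"

definition updz :: "(nat \<Rightarrow> nat \<Rightarrow> complex) \<Rightarrow> nat \<Rightarrow> nat \<Rightarrow> complex \<Rightarrow> (nat \<Rightarrow> nat \<Rightarrow> complex)" where
  "updz zz i j u = zz(i := (zz i)(j := u))"

text \<open>Ratios t such that the point (z_{i,j-1}+z_{i,j+1})/2 equals t * z_{i,j+1}, once the
  already eliminated variable z_{i,j-1} is replaced by the point t' * z_{i,j} (t' in midRatios (j-1))
  at which its residue was taken (z_{i,0} = z0 was taken at 0).  The point 0 itself is ratio 0.\<close>
fun midRatios :: "nat \<Rightarrow> real set" where
  "midRatios 0 = {0}"
| "midRatios (Suc j) = {0} \<union> (\<lambda>t. 1 / (2 - t)) ` midRatios j"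

definition resWZ0 :: "nat list \<Rightarrow> nat list \<Rightarrow> nat \<Rightarrow> nat \<Rightarrow> nat list \<Rightarrow>
    (nat \<Rightarrow> nat \<Rightarrow> complex) \<Rightarrow> complex" where
  "resWZ0 a k d f ds zz =
     residue (\<lambda>z0. residue (\<lambda>w. fGamma a k d f ds w z0 zz) z0) 0"

definition midStep :: "nat \<Rightarrow> nat \<Rightarrow> ((nat \<Rightarrow> nat \<Rightarrow> complex) \<Rightarrow> complex)
    \<Rightarrow> ((nat \<Rightarrow> nat \<Rightarrow> complex) \<Rightarrow> complex)" where
  "midStep i j G = (\<lambda>zz. \<Sum>t\<in>midRatios j.
       residue (\<lambda>u. G (updz zz i j u)) (of_real t * zz i (j + 1)))"

definition lastStep :: "nat \<Rightarrow> nat \<Rightarrow> ((nat \<Rightarrow> nat \<Rightarrow> complex) \<Rightarrow> complex)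
    \<Rightarrow> ((nat \<Rightarrow> nat \<Rightarrow> complex) \<Rightarrow> complex)" where
  "lastStep i dd G = (\<lambda>zz. residue (\<lambda>u. G (updz zz i dd u)) 0)"

definition chainRes :: "nat \<Rightarrow> nat \<Rightarrow> ((nat \<Rightarrow> nat \<Rightarrow> complex) \<Rightarrow> complex)
    \<Rightarrow> ((nat \<Rightarrow> nat \<Rightarrow> complex) \<Rightarrow> complex)" where
  "chainRes i dd G = lastStep i dd (fold (midStep i) [1..<dd] G)"

text \<open>Res(f_Gamma): chains processed in the order i = 0, ..., l-1; after all variables are
  eliminated the value is evaluated at an arbitrary (here zero) assignment.\<close>
definition ResGamma :: "nat list \<Rightarrow> nat list \<Rightarrow> nat \<Rightarrow> nat \<Rightarrow> nat list \<Rightarrow> complex" where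
  "ResGamma a k d f ds =
     fold (\<lambda>i G. chainRes i (ds!i) G) [0..<length ds] (resWZ0 a k d f ds) (\<lambda>_ _. 0)"

end

theory Submission
  imports Defs
begin

lemma ld_mult:
  assumes "(f has_field_derivative (Lf * f z)) (at z)" "(g has_field_derivative (Lg * g z)) (at z)"
  shows "((\<lambda>w. f w * g w) has_field_derivative ((Lf + Lg) * (f z * g z))) (at z)"
  using DERIV_mult[OF assms] by (simp add: algebra_simps)

lemma ld_inverse:
  fixes f :: "complex \<Rightarrow> complex"
  assumes "(f has_field_derivative (L * f z)) (at z)" "f z \<noteq> 0"
  shows "((\<lambda>w. inverse (f w)) has_field_derivative ((- L) * inverse (f z))) (at z)"
proof -
  have "((\<lambda>w. inverse (f w)) has_field_derivative (- ((L * f z) * inverse (f z ^ 2)))) (at z)"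
    using DERIV_inverse_fun[OF assms(1) assms(2)] by (simp add: power2_eq_square)
  moreover have "- ((L * f z) * inverse (f z ^ 2)) = (- L) * inverse (f z)"
    using assms(2) by (simp add: power2_eq_square field_simps)
  ultimately show ?thesis by simp
qed

lemma ld_prod:
  fixes F :: "'i \<Rightarrow> complex \<Rightarrow> complex"
  assumes "finite I" "\<And>i. i \<in> I \<Longrightarrow> (F i has_field_derivative (L i * F i z)) (at z)"
  shows "((\<lambda>w. \<Prod>i\<in>I. F i w) has_field_derivative ((\<Sum>i\<in>I. L i) * (\<Prod>i\<in>I. F i z))) (at z)"
  using assms
proof (induction I rule: finite_induct)
  case empty
  then show ?case by simp
next
  case (insert x I)
  have "((\<lambda>w. F x w * (\<Prod>i\<in>I. F i w)) has_field_derivative ((L x + (\<Sum>i\<in>I. L i)) * (F x z * (\<Prod>i\<in>I. F i z)))) (at z)"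
    by (rule ld_mult) (use insert in auto)
  then show ?case using insert by simp
qed

lemma ld_lin:
  fixes c b z :: complex
  assumes "c * z + b \<noteq> 0"
  shows "((\<lambda>w. c * w + b) has_field_derivative ((c / (c * z + b)) * (c * z + b))) (at z)"
proof -
  have "((\<lambda>w. c * w + b) has_field_derivative c) (at z)"
    by (auto intro!: derivative_eq_intros)
  then show ?thesis using assms by simp
qed

lemma gauss1: "(\<Sum>j\<in>{1..<a}. (of_nat j::complex)) = of_nat a * (of_nat a - 1) / 2"
  by (induction a) (auto simp: field_simps)

lemma gauss0: "(\<Sum>j\<in>{0..a}. (of_nat j::complex)) = of_nat a * (of_nat a + 1) / 2"
  by (induction a) (auto simp: field_simps)


lemma lin_val:
  fixes z0 :: complex
  assumes "j \<le> n"
  shows "of_nat j * z0 + of_nat (n - j) * z0 = of_nat n * z0"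
  using assms by (simp add: of_nat_diff algebra_simps)

lemma ld_lin_nat:
  fixes z0 :: complex
  assumes "j \<le> n" "n > 0" "z0 \<noteq> 0"
  shows "((\<lambda>w. of_nat j * w + of_nat (n - j) * z0) has_field_derivative
     ((of_nat j / (of_nat n * z0)) * (of_nat j * z0 + of_nat (n - j) * z0))) (at z0)"
  using ld_lin[of "of_nat j" z0 "of_nat (n - j) * z0"] lin_val[OF assms(1), of z0] assms by simp

lemma ld_ecy:
  fixes z0 :: complex
  assumes "n > 0" "z0 \<noteq> 0"
  shows "((\<lambda>w. ecy n w z0) has_field_derivative (((of_nat n + 1) / (2 * z0)) * ecy n z0 z0)) (at z0)"
proof -
  have "((\<lambda>w. ecy n w z0) has_field_derivative ((\<Sum>j\<in>{0..n}. of_nat j / (of_nat n * z0)) * ecy n z0 z0)) (at z0)"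
    unfolding ecy_def by (rule ld_prod) (use ld_lin_nat assms in auto)
  moreover have "(\<Sum>j\<in>{0..n}. of_nat j / (of_nat n * z0)) = (of_nat n + 1) / (2 * z0)"
    using assms by (simp add: sum_divide_distrib[symmetric] gauss0 field_simps)
  ultimately show ?thesis by simp
qed

lemma ld_qcy:
  fixes z0 :: complex
  assumes "\<forall>x\<in>set a. x > 0" "z0 \<noteq> 0"
  shows "((\<lambda>w. qcy a w z0) has_field_derivative
     ((\<Sum>i<length a. (of_nat (a!i) - 1) / (2 * z0)) * qcy a z0 z0)) (at z0)"
proof -
  have inner: "((\<lambda>w. \<Prod>j\<in>{1..<a!i}. of_nat j * w + of_nat (a!i - j) * z0) has_field_derivative
     (((of_nat (a!i) - 1) / (2 * z0)) * (\<Prod>j\<in>{1..<a!i}. of_nat j * z0 + of_nat (a!i - j) * z0))) (at z0)"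
    if "i < length a" for i
  proof -
    have pos: "a!i > 0" using assms that by auto
    have "((\<lambda>w. \<Prod>j\<in>{1..<a!i}. of_nat j * w + of_nat (a!i - j) * z0) has_field_derivative
     ((\<Sum>j\<in>{1..<a!i}. of_nat j / (of_nat (a!i) * z0)) * (\<Prod>j\<in>{1..<a!i}. of_nat j * z0 + of_nat (a!i - j) * z0))) (at z0)"
      by (rule ld_prod) (use ld_lin_nat pos assms in auto)
    moreover have "(\<Sum>j\<in>{1..<a!i}. of_nat j / (of_nat (a!i) * z0)) = (of_nat (a!i) - 1) / (2 * z0)"
    proof -
      have "(\<Sum>j\<in>{1..<a!i}. of_nat j / (of_nat (a!i) * z0)) = (\<Sum>j\<in>{1..<a!i}. (of_nat j::complex)) / (of_nat (a!i) * z0)"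
        by (simp add: sum_divide_distrib)
      also have "\<dots> = (of_nat (a!i) - 1) / (2 * z0)"
        unfolding gauss1 using assms pos by (simp add: field_simps)
      finally show ?thesis .
    qed
    ultimately show ?thesis by simp
  qed
  show ?thesis
    unfolding qcy_def by (rule ld_prod) (use inner in auto)
qed


lemma X_alg:
  fixes n mm u z0 :: complex
  assumes n0: "n \<noteq> 0" and u0: "u \<noteq> 0" and z0: "z0 \<noteq> 0"
  shows "- ((n - mm) / n) * (- (n * u) * inverse (z0 * u * (z0 * u)))
       = (- (n - mm) / (2 * z0)) * (- ((n - mm) / n) * (1 / (z0 * u)) - ((n + mm) / n) * (1 / (z0 * u)))"
proof -
  have r: "- ((n - mm) / n) * (1 / (z0 * u)) - ((n + mm) / n) * (1 / (z0 * u)) = - 2 / (z0 * u)"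
  proof -
    have "- ((n - mm) / n) * (1 / (z0 * u)) - ((n + mm) / n) * (1 / (z0 * u))
        = (- ((n - mm) / n) - ((n + mm) / n)) * (1 / (z0 * u))" by (simp only: left_diff_distrib)
    also have "(- ((n - mm) / n) - ((n + mm) / n)) = -2" using n0 by (simp add: field_simps)
    finally show ?thesis by simp
  qed
  have l: "- ((n - mm) / n) * (- (n * u) * inverse (z0 * u * (z0 * u))) = (n - mm) / (z0 * z0 * u)"
    using n0 u0 by (simp add: divide_inverse inverse_mult_distrib)
  have "(n - mm) / (z0 * z0 * u) = (- (n - mm) / (2 * z0)) * (- 2 / (z0 * u))"
    using u0 z0 by (simp add: field_simps)
  then show ?thesis unfolding r l .
qed


lemma ld_X:
  fixes z0 :: complex and N m :: nat
  assumes "N > 0" "z0 \<noteq> 0"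
  shows "((\<lambda>w. - ((of_nat N - of_nat m) / of_nat N) * (1 / w ^ N) - ((of_nat N + of_nat m) / of_nat N) * (1 / z0 ^ N))
     has_field_derivative ((- (of_nat N - of_nat m) / (2 * z0)) *
       (- ((of_nat N - of_nat m) / of_nat N) * (1 / z0 ^ N) - ((of_nat N + of_nat m) / of_nat N) * (1 / z0 ^ N)))) (at z0)"
proof -
  define u where "u = z0 ^ (N - 1)"
  have zu: "z0 ^ N = z0 * u" unfolding u_def using assms by (cases N) auto
  have u0: "u \<noteq> 0" unfolding u_def using assms by simp
  have n0: "(of_nat N :: complex) \<noteq> 0" using assms by simp
  have "((\<lambda>w. - ((of_nat N - of_nat m) / of_nat N) * (1 / w ^ N) - ((of_nat N + of_nat m) / of_nat N) * (1 / z0 ^ N))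
     has_field_derivative (- ((of_nat N - of_nat m) / of_nat N) * (- (of_nat N * z0 ^ (N - 1)) * inverse (z0 ^ N * z0 ^ N)))) (at z0)"
    unfolding divide_inverse[of 1] mult_1_left
    by (rule derivative_eq_intros refl | use assms in simp)+
  then show ?thesis
    unfolding zu u_def[symmetric] X_alg[OF n0 u0 assms(2)] .
qed


lemma rearr:
  fixes S0 P1 Xw w z0 q q0 Pp Pc Pw C2 C3 :: complex
  assumes "Pp = Pc * Pw"
  shows "S0 * P1 * Xw * (1 / ((w - z0)^2 * q * q0)) * Pp * C2 * C3
       = (S0 * P1 * inverse q0 * Pc * C2 * C3) * (Xw * inverse q * Pw) / (w - z0) ^ Suc 1"
  using assms by (simp add: divide_inverse inverse_mult_distrib mult_ac power2_eq_square)

lemma prod_split: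
  fixes A E B c D :: "nat \<Rightarrow> complex" and w :: complex
  shows "(\<Prod>p\<in>I. A p * (E p * B p / (c p * w * D p)))
     = (\<Prod>p\<in>I. A p * (B p / (c p * D p))) * (\<Prod>p\<in>I. E p * inverse w)"
  unfolding prod.distrib[symmetric]
  by (rule prod.cong) (simp_all add: divide_inverse inverse_mult_distrib mult_ac)

definition Xf :: "nat \<Rightarrow> nat \<Rightarrow> complex \<Rightarrow> complex \<Rightarrow> complex" where
  "Xf N m z0 w = - ((of_nat N - of_nat m) / of_nat N) * (1 / w ^ N) - ((of_nat N + of_nat m) / of_nat N) * (1 / z0 ^ N)"

definition gf :: "nat list \<Rightarrow> nat list \<Rightarrow> complex \<Rightarrow> complex \<Rightarrow> complex" where
  "gf a k z0 w = Xf (length a) (length k) z0 w * inverse (qcy a w z0) * (\<Prod>p<length k. ecy (k!p) w z0 * inverse w)"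

lemma fGamma_split:
  "\<exists>K. \<forall>w. fGamma a k d f ds w z0 zz = K * gf a k z0 w / (w - z0) ^ Suc 1"
  unfolding fGamma_def Let_def gf_def Xf_def
  apply (rule exI, rule allI, rule rearr)
  apply (rule prod_split)
  done


lemma qcy_nz:
  fixes z0 :: complex
  assumes "\<forall>x\<in>set a. x > 0" "z0 \<noteq> 0"
  shows "qcy a z0 z0 \<noteq> 0"
  unfolding qcy_def using assms lin_val by (auto simp: prod_zero_iff)

lemma gf_deriv:
  fixes z0 :: complex
  assumes "length a \<ge> 1" "\<forall>x\<in>set a. x > 0" "\<forall>x\<in>set k. x > 0"
    and "sum_list a = sum_list k" "z0 \<noteq> 0"
  shows "(gf a k z0 has_field_derivative 0) (at z0)"
proof -
  let ?N = "length a" and ?m = "length k"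
  have d1: "((\<lambda>w. Xf ?N ?m z0 w * inverse (qcy a w z0)) has_field_derivative
     ((- (of_nat ?N - of_nat ?m) / (2 * z0) + - (\<Sum>i<?N. (of_nat (a!i) - 1) / (2 * z0)))
       * (Xf ?N ?m z0 z0 * inverse (qcy a z0 z0)))) (at z0)"
  proof (rule ld_mult)
    show "(Xf ?N ?m z0 has_field_derivative ((- (of_nat ?N - of_nat ?m) / (2 * z0)) * Xf ?N ?m z0 z0)) (at z0)"
      unfolding Xf_def[abs_def] by (rule ld_X) (use assms in auto)
    show "((\<lambda>w. inverse (qcy a w z0)) has_field_derivative
      (- (\<Sum>i<?N. (of_nat (a!i) - 1) / (2 * z0))) * inverse (qcy a z0 z0)) (at z0)"
      by (rule ld_inverse[OF ld_qcy]) (use assms qcy_nz in auto)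
  qed
  have d2: "((\<lambda>w. \<Prod>p<?m. ecy (k!p) w z0 * inverse w) has_field_derivative
     ((\<Sum>p<?m. ((of_nat (k!p) + 1) / (2 * z0) + - (1 / z0))) * (\<Prod>p<?m. ecy (k!p) z0 z0 * inverse z0))) (at z0)"
  proof (rule ld_prod)
    fix p assume p: "p \<in> {..<?m}"
    then have kp: "k!p > 0" using assms by auto
    have iw: "((\<lambda>w. w) has_field_derivative ((1 / z0) * z0)) (at z0)"
      using assms by (auto intro!: derivative_eq_intros)
    show "((\<lambda>w. ecy (k!p) w z0 * inverse w) has_field_derivative
        (((of_nat (k!p) + 1) / (2 * z0) + - (1 / z0)) * (ecy (k!p) z0 z0 * inverse z0))) (at z0)"
      by (rule ld_mult[OF ld_ecy[OF kp assms(5)] ld_inverse[OF iw assms(5)]])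
  qed simp
  have d3: "(gf a k z0 has_field_derivative
     (((- (of_nat ?N - of_nat ?m) / (2 * z0) + - (\<Sum>i<?N. (of_nat (a!i) - 1) / (2 * z0)))
       + (\<Sum>p<?m. ((of_nat (k!p) + 1) / (2 * z0) + - (1 / z0)))) * gf a k z0 z0)) (at z0)"
    using ld_mult[OF d1 d2] unfolding gf_def[abs_def] by simp
  have sa: "(\<Sum>i<?N. (of_nat (a!i) - 1) / (2 * z0)) = (of_nat (sum_list a) - of_nat ?N) / (2 * z0)"
    by (simp add: sum_divide_distrib[symmetric] sum_subtractf sum_list_sum_nth lessThan_atLeast0)
  have sk: "(\<Sum>p<?m. ((of_nat (k!p) + 1) / (2 * z0) + - (1 / z0))) = (of_nat (sum_list k) - of_nat ?m) / (2 * z0)"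
  proof -
    have "(\<Sum>p<?m. ((of_nat (k!p) + 1) / (2 * z0) + - (1 / z0))) = (\<Sum>p<?m. (of_nat (k!p) - 1) / (2 * z0))"
      using assms(5) by (intro sum.cong) (simp_all add: field_simps)
    also have "\<dots> = (of_nat (sum_list k) - of_nat ?m) / (2 * z0)"
      by (simp add: sum_divide_distrib[symmetric] sum_subtractf sum_list_sum_nth lessThan_atLeast0)
    finally show ?thesis .
  qed
  have "(- (of_nat ?N - of_nat ?m) / (2 * z0) + - (\<Sum>i<?N. (of_nat (a!i) - 1) / (2 * z0)))
       + (\<Sum>p<?m. ((of_nat (k!p) + 1) / (2 * z0) + - (1 / z0))) = (0::complex)"
    unfolding sa sk assms(4) by (simp add: diff_divide_distrib add_divide_distrib[symmetric])
  then show ?thesis using d3 by simp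
qed


lemma res_w_zero:
  fixes z0 :: complex
  assumes "length a \<ge> 1" "\<forall>x\<in>set a. x > 0" "\<forall>x\<in>set k. x > 0"
    and "sum_list a = sum_list k" "z0 \<noteq> 0"
  shows "residue (\<lambda>w. fGamma a k d f ds w z0 zz) z0 = 0"
proof -
  obtain K where K: "\<And>w. fGamma a k d f ds w z0 zz = K * gf a k z0 w / (w - z0) ^ Suc 1"
    using fGamma_split by blast
  define A where "A = {w. w \<noteq> 0} \<inter> {w. qcy a w z0 \<noteq> 0}"
  have cq: "continuous_on UNIV (\<lambda>w. qcy a w z0)"
    unfolding qcy_def by (intro continuous_intros)
  have oA: "open A" unfolding A_def
    by (intro open_Int open_Collect_neq cq continuous_intros)
  have zA: "z0 \<in> A" unfolding A_def using assms qcy_nz by auto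
  have hq: "(\<lambda>w. qcy a w z0) holomorphic_on A"
    unfolding qcy_def by (intro holomorphic_intros)
  have hol: "(\<lambda>w. K * gf a k z0 w) holomorphic_on A"
    unfolding gf_def Xf_def ecy_def
    by (intro holomorphic_intros hq) (auto simp: A_def)
  have "residue (\<lambda>w. fGamma a k d f ds w z0 zz) z0 = residue (\<lambda>w. K * gf a k z0 w / (w - z0) ^ Suc 1) z0"
    unfolding K ..
  also have "\<dots> = (deriv ^^ 1) (\<lambda>w. K * gf a k z0 w) z0 / fact 1"
    by (rule residue_holomorphic_over_power[OF oA zA hol])
  also have "deriv (\<lambda>w. K * gf a k z0 w) z0 = K * 0"
    by (rule DERIV_imp_deriv, rule DERIV_cmult, rule gf_deriv) (use assms in auto)
  then have "(deriv ^^ 1) (\<lambda>w. K * gf a k z0 w) z0 / fact 1 = 0" by simp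
  finally show ?thesis .
qed

lemma resWZ0_zero:
  assumes "length a \<ge> 1" "\<forall>x\<in>set a. x > 0" "\<forall>x\<in>set k. x > 0"
    and "sum_list a = sum_list k"
  shows "resWZ0 a k d f ds = (\<lambda>_. 0)"
proof
  fix zz
  have "residue (\<lambda>z0. residue (\<lambda>w. fGamma a k d f ds w z0 zz) z0) 0 = residue (\<lambda>_. 0) 0"
  proof (rule residue_cong)
    show "eventually (\<lambda>z0. residue (\<lambda>w. fGamma a k d f ds w z0 zz) z0 = 0) (at (0::complex))"
      unfolding eventually_at
      by (rule exI[of _ 1]) (use res_w_zero assms in auto)
  qed simp
  then show "resWZ0 a k d f ds zz = 0" unfolding resWZ0_def residue_const by simp
qed

lemma fold_mid_zero: "fold (midStep i) js (\<lambda>_. 0) = (\<lambda>_. 0)"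
  by (induction js) (simp_all add: midStep_def residue_const)

lemma chainRes_zero: "chainRes i dd (\<lambda>_. 0) = (\<lambda>_. 0)"
  unfolding chainRes_def fold_mid_zero lastStep_def by (simp add: residue_const)

lemma fold_chain_zero: "fold (\<lambda>i G. chainRes i (ds!i) G) is (\<lambda>_. 0) = (\<lambda>_. 0)"
  by (induction "is") (simp_all add: chainRes_zero)

theorem proposition1:
  fixes a k ds :: "nat list" and d f :: nat
  assumes "length a \<ge> 1" and "length k \<ge> 1"
    and "\<forall>x\<in>set a. x > 0" and "\<forall>x\<in>set k. x > 0"
    and "sum_list a = sum_list k"
    and "d \<ge> 2" and "1 \<le> f" and "f \<le> d - 1"
    and "sorted ds" and "\<forall>x\<in>set ds. x > 0" and "sum_list ds = d - f"
  shows "ResGamma a k d f ds = 0"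
  unfolding ResGamma_def resWZ0_zero[OF assms(1,3,4,5)] fold_chain_zero by simp

end
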